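(* Let $d\ge1$, $\sigma_1>0$, $\beta>3$, and $p_+\in(0,1)$ with $p_-:=1-p_+\ge\frac12$. Let $(X,Y)$ be distributed as follows: $\mathbb P(Y=+1)=p_+$, $\mathbb P(Y=-1)=p_-$, $X\mid Y=+1\sim\mathcal N(0,\sigma_1^2\mathbf I_d)$ and $X\mid Y=-1\sim\mathcal N(0,\beta\sigma_1^2\mathbf I_d)$. Let $\Phi$ be the CDF of $\mathcal N(0,1)$. For any $\theta\in\mathbb R^d\setminus\{0\}$ and $b>0$, the linear classifier $f(x)=\mathrm{sign}(\langle\theta,x\rangle+b)$ has error probability $$\mathrm{err}_f:=\mathbb P\big(f(X)\neq Y\big)=p_+\Phi\Big(-\frac{b}{\|\theta\|_2\sigma_1}\Big)+p_-\Phi\Big(\frac{b}{\|\theta\|_2\sqrt\beta\,\sigma_1}\Big)\ge\frac14.$$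
   Context: $\mathbf I_d$ is the $d\times d$ identity matrix. The event $\langle\theta,X\rangle+b=0$ has probability zero, so the convention for $\mathrm{sign}(0)$ is immaterial. *)

theory Defs
  imports "HOL-Probability.Probability"
begin

definition Phi :: "real \<Rightarrow> real" where
  "Phi t = measure (density lborel std_normal_density) {..t}"

text \<open>Density of the isotropic Gaussian N(0, s^2 I_d) on a Euclidean space of dimension d = DIM('a)
  (s is the standard deviation per coordinate), w.r.t. Lebesgue measure.\<close>
definition iso_gauss_density :: "real \<Rightarrow> 'a::euclidean_space \<Rightarrow> real" where
  "iso_gauss_density s x = (\<Prod>i\<in>Basis. normal_density 0 s (x \<bullet> i))"

definition joint_law :: "real \<Rightarrow> real \<Rightarrow> real \<Rightarrow> ('a::euclidean_space \<times> int) measure" where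
  "joint_law pp s1 beta = density (lborel \<Otimes>\<^sub>M count_space UNIV)
     (\<lambda>(x, y). ennreal (if y = 1 then pp * iso_gauss_density s1 x
                         else if y = -1 then (1 - pp) * iso_gauss_density (sqrt beta * s1) x
                         else 0))"

text \<open>sign with the (immaterial) convention sign 0 = 1.\<close>
definition sgn_lab :: "real \<Rightarrow> int" where
  "sgn_lab t = (if t \<ge> 0 then 1 else -1)"

definition lin_clf :: "'a::euclidean_space \<Rightarrow> real \<Rightarrow> 'a \<Rightarrow> int" where
  "lin_clf \<theta> b x = sgn_lab (\<theta> \<bullet> x + b)"

definition err_prob :: "('a::euclidean_space \<times> int) measure \<Rightarrow> ('a \<Rightarrow> int) \<Rightarrow> real" where
  "err_prob M f = measure M {(x, y). f x \<noteq> y}"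

end

theory Submission
  imports Defs
begin


lemma Phi_nn: "Phi t \<ge> 0" unfolding Phi_def by simp

lemma std_ps: "prob_space (density lborel std_normal_density)"
  by (rule prob_space_normal_density) simp

lemma normal_lessThan:
  assumes "\<sigma> > 0"
  shows "emeasure (density lborel (normal_density 0 \<sigma>)) {..c} = ennreal (Phi (c / \<sigma>))"
proof -
  let ?Q = "density lborel std_normal_density"
  interpret Q: prob_space ?Q by (rule std_ps)
  have d0: "distributed ?Q lborel (\<lambda>x. x) std_normal_density"
    unfolding distributed_def by (auto simp: distr_id2)
  have d1: "distributed ?Q lborel (\<lambda>x. 0 + \<sigma> * x) (normal_density (0 + \<sigma> * 0) (\<bar>\<sigma>\<bar> * 1))"
    by (rule Q.normal_density_affine[OF d0]) (use assms in auto)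
  have d: "distributed ?Q lborel (\<lambda>x. \<sigma> * x) (normal_density 0 \<sigma>)"
    using d1 assms by simp
  have "emeasure (density lborel (normal_density 0 \<sigma>)) {..c} = emeasure ?Q ((\<lambda>x. \<sigma> * x) -` {..c} \<inter> space ?Q)"
    using distributed_emeasure[OF d, of "{..c}"] by (simp add: emeasure_density)
  also have "(\<lambda>x. \<sigma> * x) -` {..c} \<inter> space ?Q = {..c/\<sigma>}"
    using assms by (auto simp: field_simps)
  also have "emeasure ?Q {..c/\<sigma>} = ennreal (Phi (c / \<sigma>))"
    unfolding Phi_def by (simp add: Q.emeasure_eq_measure)
  finally show ?thesis .
qed

lemma normal_lessThan_strict:
  assumes "\<sigma> > 0"
  shows "emeasure (density lborel (normal_density 0 \<sigma>)) {..<c} = ennreal (Phi (c / \<sigma>))"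
proof -
  have "emeasure (density lborel (normal_density 0 \<sigma>)) {..<c} = emeasure (density lborel (normal_density 0 \<sigma>)) {..c}"
    apply (simp add: emeasure_density)
    apply (rule nn_integral_cong_AE)
    using AE_lborel_singleton[of c] by eventually_elim (auto split: split_indicator)
  then show ?thesis using normal_lessThan[OF assms] by simp
qed

lemma Phi_half: "Phi 0 = 1/2"
proof -
  let ?Q = "density lborel std_normal_density"
  interpret Q: prob_space ?Q by (rule std_ps)
  have d0: "distributed ?Q lborel (\<lambda>x. x) std_normal_density"
    unfolding distributed_def by (auto simp: distr_id2)
  have d1: "distributed ?Q lborel (\<lambda>x. 0 + (-1) * x) (normal_density (0 + (-1) * 0) (\<bar>-1\<bar> * 1))"
    by (rule Q.normal_density_affine[OF d0]) auto
  have d: "distributed ?Q lborel (\<lambda>x. - x) std_normal_density"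
    using d1 by simp
  have "emeasure ?Q {..0} = emeasure ?Q ((\<lambda>x. - x) -` {..0} \<inter> space ?Q)"
    using distributed_emeasure[OF d, of "{..0}"] by (simp add: emeasure_density)
  also have "(\<lambda>x. - x) -` {..0::real} \<inter> space ?Q = {0..}" by auto
  finally have e: "Q.prob {..0} = Q.prob {0..}" by (simp add: Q.emeasure_eq_measure)
  have z: "Q.prob {0} = 0"
  proof -
    have "emeasure ?Q {0} = 0"
      by (subst emeasure_density) (auto intro!: nn_integral_null_set simp: null_sets_def)
    then show ?thesis by (simp add: Q.emeasure_eq_measure)
  qed
  have u1: "Q.prob ({..0} \<union> {0<..}) = Q.prob {..0} + Q.prob {0<..}"
    by (rule Q.finite_measure_Union) auto
  have u2: "Q.prob ({0} \<union> {0<..}) = Q.prob {0} + Q.prob {0<..}"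
    by (rule Q.finite_measure_Union) auto
  have "{..0} \<union> {0<..} = (UNIV::real set)" by auto
  then have "Q.prob ({..0} \<union> {0<..}) = 1" using Q.prob_space by simp
  moreover have "{0} \<union> {0<..} = {0::real..}" by auto
  ultimately show ?thesis using u1 u2 e z unfolding Phi_def by simp
qed



lemma iso_meas[measurable]: "iso_gauss_density s \<in> borel_measurable borel"
  unfolding iso_gauss_density_def[abs_def] by measurable

lemma lborel_psf: "product_sigma_finite (\<lambda>_. lborel :: real measure)"
  unfolding product_sigma_finite_def by (simp add: lborel.sigma_finite_measure_axioms)

lemma G_psf: "s > 0 \<Longrightarrow> product_sigma_finite (\<lambda>_. density lborel (normal_density 0 s))"
  unfolding product_sigma_finite_def
  by (auto intro!: prob_space_imp_sigma_finite prob_space_normal_density)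

lemma indicator_PiE_prod:
  assumes "finite I" "f \<in> extensional I"
  shows "indicator (Pi\<^sub>E I A) f = (\<Prod>i\<in>I. indicator (A i) (f i) :: ennreal)"
  using assms by (auto simp: indicator_def PiE_def Pi_def prod.neutral)

lemma PiM_density_eq:
  fixes s :: real
  assumes "finite I" and s: "s > 0"
  shows "density (\<Pi>\<^sub>M i\<in>I. lborel) (\<lambda>f. \<Prod>i\<in>I. ennreal (normal_density 0 s (f i)))
       = (\<Pi>\<^sub>M i\<in>I. density lborel (normal_density 0 s))"
proof -
  interpret G: product_sigma_finite "\<lambda>_. density lborel (normal_density 0 s)" by (rule G_psf[OF s])
  interpret L: product_sigma_finite "\<lambda>_. lborel :: real measure" by (rule lborel_psf)
  show ?thesis
  proof (rule G.PiM_eqI[OF assms(1)])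
    show "sets (density (\<Pi>\<^sub>M i\<in>I. lborel) (\<lambda>f. \<Prod>i\<in>I. ennreal (normal_density 0 s (f i))))
        = sets (\<Pi>\<^sub>M i\<in>I. density lborel (normal_density 0 s))"
      by (auto intro!: sets_PiM_cong)
  next
    fix A assume A: "\<And>i. i \<in> I \<Longrightarrow> A i \<in> sets (density lborel (\<lambda>x. ennreal (normal_density 0 s x)))"
    then have A': "\<And>i. i \<in> I \<Longrightarrow> A i \<in> sets borel" by simp
    have "emeasure (density (\<Pi>\<^sub>M i\<in>I. lborel) (\<lambda>f. \<Prod>i\<in>I. ennreal (normal_density 0 s (f i)))) (Pi\<^sub>E I A)
      = (\<integral>\<^sup>+ f. (\<Prod>i\<in>I. ennreal (normal_density 0 s (f i))) * indicator (Pi\<^sub>E I A) f \<partial>(\<Pi>\<^sub>M i\<in>I. lborel))"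
      by (rule emeasure_density) (auto intro!: sets_PiM_I_finite assms A')
    also have "\<dots> = (\<integral>\<^sup>+ f. (\<Prod>i\<in>I. ennreal (normal_density 0 s (f i)) * indicator (A i) (f i)) \<partial>(\<Pi>\<^sub>M i\<in>I. lborel))"
    proof (rule nn_integral_cong)
      fix x assume "x \<in> space (\<Pi>\<^sub>M i\<in>I. (lborel::real measure))"
      then have "x \<in> extensional I" by (auto simp: space_PiM PiE_def)
      then show "(\<Prod>i\<in>I. ennreal (normal_density 0 s (x i))) * indicator (Pi\<^sub>E I A) x =
         (\<Prod>i\<in>I. ennreal (normal_density 0 s (x i)) * indicator (A i) (x i))"
        by (simp add: indicator_PiE_prod[OF assms(1)] prod.distrib)
    qed
    also have "\<dots> = (\<Prod>i\<in>I. \<integral>\<^sup>+ x. ennreal (normal_density 0 s x) * indicator (A i) x \<partial>lborel)"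
      by (rule L.product_nn_integral_prod[OF assms(1), where f="\<lambda>i x. ennreal (normal_density 0 s x) * indicator (A i) x"])
         (use A' in auto)
    also have "\<dots> = (\<Prod>i\<in>I. emeasure (density lborel (normal_density 0 s)) (A i))"
      by (rule prod.cong) (auto simp: emeasure_density A')
    finally show "emeasure (density (\<Pi>\<^sub>M i\<in>I. lborel) (\<lambda>f. \<Prod>i\<in>I. ennreal (normal_density 0 s (f i)))) (Pi\<^sub>E I A)
       = (\<Prod>i\<in>I. emeasure (density lborel (normal_density 0 s)) (A i))" .
  qed
qed

lemma iso_as_distr:
  assumes s: "s > 0"
  shows "density lborel (\<lambda>x. ennreal (iso_gauss_density s x))
       = distr (\<Pi>\<^sub>M i\<in>(Basis::'a::euclidean_space set). density lborel (normal_density 0 s)) borel (\<lambda>f. \<Sum>b\<in>Basis. f b *\<^sub>R b)"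
proof -
  have L: "(lborel::'a measure) = distr (\<Pi>\<^sub>M b\<in>Basis. lborel) borel (\<lambda>f. \<Sum>b\<in>Basis. f b *\<^sub>R b)"
    by (rule lborel_eq)
  have "density (lborel::'a measure) (\<lambda>x. ennreal (iso_gauss_density s x))
     = density (distr (\<Pi>\<^sub>M b\<in>(Basis::'a set). lborel) borel (\<lambda>f. \<Sum>b\<in>Basis. f b *\<^sub>R b)) (\<lambda>x. ennreal (iso_gauss_density s x))"
    using L by simp
  also have "\<dots> = distr (density (\<Pi>\<^sub>M b\<in>(Basis::'a set). lborel) (\<lambda>f. ennreal (iso_gauss_density s (\<Sum>b\<in>Basis. f b *\<^sub>R b)))) borel (\<lambda>f. \<Sum>b\<in>Basis. f b *\<^sub>R b)"
    by (rule density_distr) measurable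
  also have "density (\<Pi>\<^sub>M b\<in>(Basis::'a set). lborel) (\<lambda>f. ennreal (iso_gauss_density s (\<Sum>b\<in>Basis. f b *\<^sub>R b)))
     = density (\<Pi>\<^sub>M b\<in>(Basis::'a set). lborel) (\<lambda>f. \<Prod>i\<in>Basis. ennreal (normal_density 0 s (f i)))"
  proof (rule density_cong)
    show "AE x in \<Pi>\<^sub>M b\<in>(Basis::'a set). lborel. ennreal (iso_gauss_density s (\<Sum>b\<in>Basis. x b *\<^sub>R b)) = (\<Prod>i\<in>Basis. ennreal (normal_density 0 s (x i)))"
      by (rule AE_I2)
        (simp add: iso_gauss_density_def inner_sum_left inner_Basis if_distrib sum.If_cases prod_ennreal cong: prod.cong)
  qed measurable
  also have "\<dots> = (\<Pi>\<^sub>M i\<in>(Basis::'a set). density lborel (normal_density 0 s))"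
    by (rule PiM_density_eq) (simp_all add: s)
  finally show ?thesis .
qed



lemma lin_law:
  fixes \<theta> :: "'a::euclidean_space"
  assumes s: "s > 0" and th: "\<theta> \<noteq> 0" and A: "A \<in> sets borel"
  shows "emeasure (density lborel (\<lambda>x. ennreal (iso_gauss_density s x))) {x. \<theta> \<bullet> x \<in> A}
       = emeasure (density lborel (normal_density 0 (norm \<theta> * s))) A"
proof -
  define G where "G = density lborel (\<lambda>x. ennreal (normal_density 0 s x))"
  define P where "P = (\<Pi>\<^sub>M i\<in>(Basis::'a set). G)"
  define e where "e = (\<lambda>f. \<Sum>b\<in>(Basis::'a set). f b *\<^sub>R b)"
  define I where "I = {i\<in>(Basis::'a set). \<theta> \<bullet> i \<noteq> 0}"
  define Z where "Z = (\<lambda>f. \<Sum>i\<in>I. (\<theta> \<bullet> i) * f i)"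
  have G: "prob_space G" unfolding G_def using s by (rule prob_space_normal_density)
  interpret P: prob_space P unfolding P_def by (rule prob_space_PiM) (rule G)
  have sG: "sets G = sets borel" by (simp add: G_def)
  have I: "finite I" "I \<subseteq> Basis" unfolding I_def by auto
  have Ine: "I \<noteq> {}"
  proof
    assume "I = {}"
    then have "\<forall>i\<in>Basis. \<theta> \<bullet> i = 0" unfolding I_def by auto
    then have "\<theta> = 0" using euclidean_all_zero_iff by blast
    with th show False by simp
  qed
  have comp: "\<And>i. i \<in> Basis \<Longrightarrow> distr P G (\<lambda>f. f i) = G"
    unfolding P_def by (rule distr_PiM_component) (use G in auto)
  have rv: "(\<lambda>f. f i) \<in> measurable P G" if "i \<in> Basis" for i
    unfolding P_def by (rule measurable_component_singleton[OF that])
  have ind0: "P.indep_vars (\<lambda>_. G) (\<lambda>i f. f i) Basis"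
  proof (subst P.indep_vars_iff_distr_eq_PiM')
    show "Basis \<noteq> {}" by simp
    show "\<And>i. i \<in> Basis \<Longrightarrow> (\<lambda>f. f i) \<in> measurable P G" using rv by blast
    have "distr P (\<Pi>\<^sub>M i\<in>Basis. G) (\<lambda>x. \<lambda>i\<in>Basis. x i) = distr P P (\<lambda>x. x)"
      by (rule distr_cong) (auto simp: P_def space_PiM PiE_def extensional_restrict)
    also have "\<dots> = P" by (rule distr_id2) simp
    also have "P = (\<Pi>\<^sub>M i\<in>Basis. distr P G (\<lambda>f. f i))"
    proof -
      have "(\<Pi>\<^sub>M i\<in>Basis. distr P G (\<lambda>f. f i)) = (\<Pi>\<^sub>M i\<in>Basis. G)"
        by (rule PiM_cong) (simp_all add: comp)
      then show ?thesis by (simp add: P_def)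
    qed
    finally show "distr P (\<Pi>\<^sub>M i\<in>Basis. G) (\<lambda>x. \<lambda>i\<in>Basis. x i) = (\<Pi>\<^sub>M i\<in>Basis. distr P G (\<lambda>f. f i))" .
  qed
  have ind1: "P.indep_vars (\<lambda>_. G) (\<lambda>i f. f i) I" by (rule P.indep_vars_subset[OF ind0 I(2)])
  have mc: "(\<lambda>x. c * x) \<in> measurable G borel" for c :: real unfolding G_def by simp
  have ind: "P.indep_vars (\<lambda>_. borel) (\<lambda>i f. (\<theta> \<bullet> i) * f i) I"
    using P.indep_vars_compose[OF ind1, of "\<lambda>i x. (\<theta> \<bullet> i) * x" "\<lambda>_. borel"] mc by (simp add: comp_def)
  have dist: "distributed P lborel (\<lambda>f. f i) (normal_density 0 s)" if i: "i \<in> Basis" for i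
  proof -
    have m: "(\<lambda>f. f i) \<in> measurable P lborel"
    proof -
      have "measurable P G = measurable P lborel" by (rule measurable_cong_sets) (simp_all add: sG)
      then show ?thesis using rv[OF i] by simp
    qed
    have "distr P lborel (\<lambda>f. f i) = distr P G (\<lambda>f. f i)"
      by (rule distr_cong) (simp_all only: sG sets_lborel)
    also have "\<dots> = G" by (rule comp[OF i])
    finally show ?thesis unfolding distributed_def using m by (simp add: G_def)
  qed
  have distI: "distributed P lborel (\<lambda>f. (\<theta> \<bullet> i) * f i) (normal_density 0 (\<bar>\<theta> \<bullet> i\<bar> * s))" if i: "i \<in> I" for i
    using P.normal_density_affine[OF dist, of i "\<theta> \<bullet> i" 0] i s unfolding I_def by simp
  have distZ: "distributed P lborel Z (normal_density (\<Sum>i\<in>I. 0) (sqrt (\<Sum>i\<in>I. (\<bar>\<theta> \<bullet> i\<bar> * s)\<^sup>2)))"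
    unfolding Z_def
  proof (rule P.sum_indep_normal[OF I(1) Ine ind, where \<mu>="\<lambda>_. 0" and \<sigma>="\<lambda>i. \<bar>\<theta> \<bullet> i\<bar> * s"])
    fix i assume "i \<in> I"
    then show "0 < \<bar>\<theta> \<bullet> i\<bar> * s" using s unfolding I_def by simp
  next
    fix i assume "i \<in> I"
    then show "distributed P lborel (\<lambda>f. (\<theta> \<bullet> i) * f i) (normal_density 0 (\<bar>\<theta> \<bullet> i\<bar> * s))"
      by (rule distI)
  qed
  have "(\<Sum>i\<in>I. (\<bar>\<theta> \<bullet> i\<bar> * s)\<^sup>2) = (\<Sum>i\<in>I. s\<^sup>2 * (\<theta> \<bullet> i)\<^sup>2)"
    by (rule sum.cong) (simp_all add: power_mult_distrib)
  also have "\<dots> = (\<Sum>i\<in>Basis. s\<^sup>2 * (\<theta> \<bullet> i)\<^sup>2)"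
    by (rule sum.mono_neutral_left) (auto simp: I_def)
  also have "\<dots> = s\<^sup>2 * (\<Sum>i\<in>Basis. (\<theta> \<bullet> i)\<^sup>2)" by (simp add: sum_distrib_left)
  also have "(\<Sum>i\<in>Basis. (\<theta> \<bullet> i)\<^sup>2) = (norm \<theta>)\<^sup>2"
  proof -
    have "(norm \<theta>)\<^sup>2 = \<theta> \<bullet> \<theta>" by (rule power2_norm_eq_inner)
    also have "\<dots> = (\<Sum>i\<in>Basis. (\<theta> \<bullet> i)\<^sup>2)" by (simp add: euclidean_inner[of \<theta> \<theta>] power2_eq_square)
    finally show ?thesis by simp
  qed
  finally have "sqrt (\<Sum>i\<in>I. (\<bar>\<theta> \<bullet> i\<bar> * s)\<^sup>2) = norm \<theta> * s"
    using s by (simp add: real_sqrt_mult)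
  with distZ have distZ': "distributed P lborel Z (normal_density 0 (norm \<theta> * s))" by simp
  have me: "e \<in> measurable P borel"
  proof -
    have "measurable P borel = measurable (\<Pi>\<^sub>M i\<in>(Basis::'a set). (lborel::real measure)) borel"
      unfolding P_def by (rule measurable_cong_sets) (auto intro!: sets_PiM_cong simp: sG)
    moreover have "e \<in> measurable (\<Pi>\<^sub>M i\<in>(Basis::'a set). (lborel::real measure)) borel"
      unfolding e_def by measurable
    ultimately show ?thesis by (metis)
  qed
  have N: "density lborel (\<lambda>x. ennreal (iso_gauss_density s x)) = distr P borel e"
    unfolding P_def G_def e_def by (rule iso_as_distr[OF s])
  have Aset: "{x::'a. \<theta> \<bullet> x \<in> A} \<in> sets borel" using A by measurable
  have eZ: "\<theta> \<bullet> e f = Z f" for f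
  proof -
    have "\<theta> \<bullet> e f = (\<Sum>i\<in>Basis. (\<theta> \<bullet> i) * f i)"
      unfolding e_def by (simp add: inner_sum_right mult.commute)
    also have "\<dots> = Z f" unfolding Z_def
      by (rule sum.mono_neutral_right) (auto simp: I_def)
    finally show ?thesis .
  qed
  have "emeasure (density lborel (\<lambda>x. ennreal (iso_gauss_density s x))) {x. \<theta> \<bullet> x \<in> A}
      = emeasure P (e -` {x. \<theta> \<bullet> x \<in> A} \<inter> space P)"
    unfolding N by (rule emeasure_distr[OF me Aset])
  also have "e -` {x. \<theta> \<bullet> x \<in> A} \<inter> space P = Z -` A \<inter> space P"
    using eZ by auto
  also have "emeasure P (Z -` A \<inter> space P) = (\<integral>\<^sup>+x. ennreal (normal_density 0 (norm \<theta> * s) x) * indicator A x \<partial>lborel)"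
    by (rule distributed_emeasure[OF distZ']) (use A in simp)
  also have "\<dots> = emeasure (density lborel (normal_density 0 (norm \<theta> * s))) A"
    using A by (simp add: emeasure_density)
  finally show ?thesis .
qed

lemma lin_le:
  fixes \<theta> :: "'a::euclidean_space"
  assumes s: "s > 0" and th: "\<theta> \<noteq> 0"
  shows "emeasure (density lborel (\<lambda>x. ennreal (iso_gauss_density s x))) {x. \<theta> \<bullet> x \<le> c}
       = ennreal (Phi (c / (norm \<theta> * s)))"
  using lin_law[OF s th, of "{..c}"] normal_lessThan[of "norm \<theta> * s" c] s th by simp

lemma lin_less:
  fixes \<theta> :: "'a::euclidean_space"
  assumes s: "s > 0" and th: "\<theta> \<noteq> 0"
  shows "emeasure (density lborel (\<lambda>x. ennreal (iso_gauss_density s x))) {x. \<theta> \<bullet> x < c}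
       = ennreal (Phi (c / (norm \<theta> * s)))"
  using lin_law[OF s th, of "{..<c}"] normal_lessThan_strict[of "norm \<theta> * s" c] s th by simp



lemma Phi_mono: "t \<le> u \<Longrightarrow> Phi t \<le> Phi u"
proof -
  assume "t \<le> u"
  interpret Q: prob_space "density lborel std_normal_density" by (rule std_ps)
  show ?thesis unfolding Phi_def by (rule Q.finite_measure_mono) (use \<open>t \<le> u\<close> in auto)
qed

lemma iso_nn: "iso_gauss_density s x \<ge> 0"
  unfolding iso_gauss_density_def by (simp add: prod_nonneg)

lemma F_meas[measurable]:
  "(\<lambda>(x, y). ennreal (if y = (1::int) then pp * iso_gauss_density s1 (x::'a::euclidean_space)
                         else if y = -1 then (1 - pp) * iso_gauss_density s2 x else 0))
    \<in> borel_measurable (lborel \<Otimes>\<^sub>M count_space UNIV)"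
  by measurable

lemma S_meas[measurable]:
  "{(x::'a::euclidean_space, y). lin_clf \<theta> b x \<noteq> y} \<in> sets (lborel \<Otimes>\<^sub>M count_space UNIV)"
proof -
  have "Measurable.pred (lborel \<Otimes>\<^sub>M count_space UNIV)
      (\<lambda>(x::'a, y::int). (0 \<le> \<theta> \<bullet> x + b \<and> y \<noteq> 1) \<or> (\<theta> \<bullet> x + b < 0 \<and> y \<noteq> -1))"
    by measurable
  then have "{z \<in> space (lborel \<Otimes>\<^sub>M count_space UNIV). (\<lambda>(x::'a, y::int). (0 \<le> \<theta> \<bullet> x + b \<and> y \<noteq> 1) \<or> (\<theta> \<bullet> x + b < 0 \<and> y \<noteq> -1)) z}
     \<in> sets (lborel \<Otimes>\<^sub>M count_space UNIV)"
    by (simp add: pred_def)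
  also have "{z \<in> space (lborel \<Otimes>\<^sub>M count_space UNIV). (\<lambda>(x::'a, y::int). (0 \<le> \<theta> \<bullet> x + b \<and> y \<noteq> 1) \<or> (\<theta> \<bullet> x + b < 0 \<and> y \<noteq> -1)) z}
     = {(x, y). lin_clf \<theta> b x \<noteq> y}"
    by (auto simp: lin_clf_def sgn_lab_def space_pair_measure split: if_splits)
  finally show ?thesis .
qed

lemma pair_sf: "pair_sigma_finite (lborel :: 'a::euclidean_space measure) (count_space (UNIV :: int set))"
  by (intro pair_sigma_finite.intro lborel.sigma_finite_measure_axioms sigma_finite_measure_count_space)

theorem theorem2:
  fixes \<theta> :: "'a::euclidean_space" and \<sigma>1 \<beta> pp b :: real
  assumes "\<sigma>1 > 0" and "\<beta> > 3" and "0 < pp" and "pp < 1" and "1 - pp \<ge> 1/2"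
    and "\<theta> \<noteq> 0" and "b > 0"
  shows "err_prob (joint_law pp \<sigma>1 \<beta>) (lin_clf \<theta> b)
           = pp * Phi (- b / (norm \<theta> * \<sigma>1)) + (1 - pp) * Phi (b / (norm \<theta> * sqrt \<beta> * \<sigma>1))
       \<and> err_prob (joint_law pp \<sigma>1 \<beta>) (lin_clf \<theta> b) \<ge> 1/4"
proof -
  note s1 = assms(1)
  have s2: "sqrt \<beta> * \<sigma>1 > 0" using assms by simp
  define F where "F = (\<lambda>(x, y). ennreal (if y = (1::int) then pp * iso_gauss_density \<sigma>1 (x::'a)
                         else if y = -1 then (1 - pp) * iso_gauss_density (sqrt \<beta> * \<sigma>1) x else 0))"
  define S where "S = {(x::'a, y::int). lin_clf \<theta> b x \<noteq> y}"
  define H where "H = (\<lambda>y. \<integral>\<^sup>+ x. F (x, y) * indicator S (x, y) \<partial>lborel)"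
  interpret PS: pair_sigma_finite "lborel :: 'a measure" "count_space (UNIV :: int set)" by (rule pair_sf)
  have Fm[measurable]: "F \<in> borel_measurable (lborel \<Otimes>\<^sub>M count_space UNIV)"
    unfolding F_def by (rule F_meas)
  have Sm[measurable]: "S \<in> sets (lborel \<Otimes>\<^sub>M count_space UNIV)"
    unfolding S_def by (rule S_meas)
  have "emeasure (joint_law pp \<sigma>1 \<beta>) S = (\<integral>\<^sup>+ z. F z * indicator S z \<partial>(lborel \<Otimes>\<^sub>M count_space UNIV))"
    unfolding joint_law_def F_def[symmetric] by (rule emeasure_density[OF Fm Sm])
  also have "\<dots> = (\<integral>\<^sup>+ y. H y \<partial>count_space UNIV)"
    unfolding H_def by (rule PS.nn_integral_snd[symmetric]) measurable
  also have "\<dots> = (\<Sum>y\<in>{1, -1}. H y)"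
    by (rule nn_integral_count_space') (auto simp: H_def F_def)
  also have "\<dots> = H 1 + H (-1)" by simp
  also have "H 1 = ennreal pp * emeasure (density lborel (\<lambda>x. ennreal (iso_gauss_density \<sigma>1 x))) {x. \<theta> \<bullet> x < - b}"
  proof -
    have "H 1 = (\<integral>\<^sup>+ x. ennreal pp * (ennreal (iso_gauss_density \<sigma>1 x) * indicator {x. \<theta> \<bullet> x < - b} x) \<partial>lborel)"
      unfolding H_def
      by (rule nn_integral_cong)
         (auto simp: F_def S_def lin_clf_def sgn_lab_def ennreal_mult iso_nn less_imp_le[OF assms(3)]
               split: split_indicator)
    also have "\<dots> = ennreal pp * (\<integral>\<^sup>+ x. ennreal (iso_gauss_density \<sigma>1 x) * indicator {x. \<theta> \<bullet> x < - b} x \<partial>lborel)"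
      by (rule nn_integral_cmult) measurable
    finally show ?thesis by (simp add: emeasure_density)
  qed
  also have "H (-1) = ennreal (1 - pp) * emeasure (density lborel (\<lambda>x. ennreal (iso_gauss_density (sqrt \<beta> * \<sigma>1) x))) {x. (- \<theta>) \<bullet> x \<le> b}"
  proof -
    have "H (-1) = (\<integral>\<^sup>+ x. ennreal (1 - pp) * (ennreal (iso_gauss_density (sqrt \<beta> * \<sigma>1) x) * indicator {x. (- \<theta>) \<bullet> x \<le> b} x) \<partial>lborel)"
      unfolding H_def
      using assms(4)
      by (intro nn_integral_cong)
         (auto simp: F_def S_def lin_clf_def sgn_lab_def ennreal_mult iso_nn
               split: split_indicator)
    also have "\<dots> = ennreal (1 - pp) * (\<integral>\<^sup>+ x. ennreal (iso_gauss_density (sqrt \<beta> * \<sigma>1) x) * indicator {x. (- \<theta>) \<bullet> x \<le> b} x \<partial>lborel)"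
      by (rule nn_integral_cmult) measurable
    finally show ?thesis by (simp add: emeasure_density)
  qed
  also have "emeasure (density lborel (\<lambda>x. ennreal (iso_gauss_density \<sigma>1 x))) {x. \<theta> \<bullet> x < - b}
      = ennreal (Phi (- b / (norm \<theta> * \<sigma>1)))"
    by (rule lin_less[OF s1 assms(6)])
  also have "emeasure (density lborel (\<lambda>x. ennreal (iso_gauss_density (sqrt \<beta> * \<sigma>1) x))) {x. (- \<theta>) \<bullet> x \<le> b}
      = ennreal (Phi (b / (norm \<theta> * sqrt \<beta> * \<sigma>1)))"
    using lin_le[OF s2, of "- \<theta>" b] assms(6) by (simp add: mult.assoc)
  finally have em: "emeasure (joint_law pp \<sigma>1 \<beta>) S =
      ennreal (pp * Phi (- b / (norm \<theta> * \<sigma>1)) + (1 - pp) * Phi (b / (norm \<theta> * sqrt \<beta> * \<sigma>1)))"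
    using assms(3,4) by (simp add: ennreal_mult Phi_nn ennreal_plus[symmetric])
  have eq: "err_prob (joint_law pp \<sigma>1 \<beta>) (lin_clf \<theta> b)
      = pp * Phi (- b / (norm \<theta> * \<sigma>1)) + (1 - pp) * Phi (b / (norm \<theta> * sqrt \<beta> * \<sigma>1))"
  proof -
    have nn: "0 \<le> pp * Phi (- b / (norm \<theta> * \<sigma>1)) + (1 - pp) * Phi (b / (norm \<theta> * sqrt \<beta> * \<sigma>1))"
      using assms(3,4) Phi_nn by simp
    show ?thesis
      unfolding err_prob_def S_def[symmetric] measure_def em by (rule enn2real_ennreal[OF nn])
  qed
  have "Phi (b / (norm \<theta> * sqrt \<beta> * \<sigma>1)) \<ge> Phi 0"
    by (rule Phi_mono) (use assms s2 in simp)
  then have h: "Phi (b / (norm \<theta> * sqrt \<beta> * \<sigma>1)) \<ge> 1/2" by (simp add: Phi_half)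
  have "(1/2) * (1/2) \<le> (1 - pp) * Phi (b / (norm \<theta> * sqrt \<beta> * \<sigma>1))"
    by (rule mult_mono) (use h assms(5) in auto)
  moreover have "0 \<le> pp * Phi (- b / (norm \<theta> * \<sigma>1))" using assms(3) Phi_nn by simp
  ultimately show ?thesis using eq by simp
qed

end
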